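(* Let $\chi_3(n)=\left(\frac{n}{3}\right)$ be the Legendre symbol modulo $3$ and let $\tilde\chi_3$ be either of its two modified characters (i.e. $\tilde\chi_3(3)=+1$ or $\tilde\chi_3(3)=-1$). Then for every integer $k\ge1$ and every $n\in\mathbb{N}\cup\{0\}$, $$\#\{1\le m\le k:\ \tilde\chi_3(n+m)=-1\}\ \ge\ \frac12\Big(k-\Big\lfloor\frac{\log k}{\log 3}\Big\rfloor-2\Big).$$ Consequently $\delta(k)\ge \tfrac12 k+O(\log k)$.
   Context: For a real Dirichlet character $\chi_q$ modulo $q>1$, a modified character $\tilde\chi_q$ is the completely multiplicative function $\mathbb{N}\to\{+1,-1\}$ with $\tilde\chi_q(p)=\chi_q(p)$ for primes $p\nmid q$ and $\tilde\chi_q(p)=\eta(p)\in\{+1,-1\}$ (an arbitrary sign) for primes $p\mid q$. Here $\delta(k)$ denotes the supremum, over all $q>1$, all real characters $\chi_q$ mod $q$ and all sign choices $\eta$, of $\min_{n\ge0}\#\{1\le m\le k:\tilde\chi_q(n+m)=-1\}$. *)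

theory Defs
  imports "HOL-Number_Theory.Number_Theory"
begin

definition real_char :: "nat \<Rightarrow> (nat \<Rightarrow> int) \<Rightarrow> bool" where
  "real_char q \<chi> \<longleftrightarrow>
     (\<forall>n. \<chi> (n + q) = \<chi> n) \<and>
     (\<forall>m n. \<chi> (m * n) = \<chi> m * \<chi> n) \<and>
     (\<forall>n. \<chi> n = 0 \<longleftrightarrow> \<not> coprime n q) \<and>
     (\<forall>n. \<chi> n \<in> {-1, 0, 1})"

text \<open>Modified character: completely multiplicative with value \<chi> p at primes p not dividing q
  and \<eta> p at primes p dividing q (only meaningful for n \<ge> 1).\<close>
definition modified_char :: "nat \<Rightarrow> (nat \<Rightarrow> int) \<Rightarrow> (nat \<Rightarrow> int) \<Rightarrow> nat \<Rightarrow> int" where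
  "modified_char q \<chi> \<eta> n =
     (\<Prod>p\<in>prime_factors n. (if p dvd q then \<eta> p else \<chi> p) ^ multiplicity p n)"

definition neg_count :: "(nat \<Rightarrow> int) \<Rightarrow> nat \<Rightarrow> nat \<Rightarrow> nat" where
  "neg_count f n k = card {m \<in> {1..k}. f (n + m) = -1}"

definition delta :: "nat \<Rightarrow> nat" where
  "delta k = Sup {Min (range (\<lambda>n. neg_count (modified_char q \<chi> \<eta>) n k)) | q \<chi> \<eta>.
       q > 1 \<and> real_char q \<chi> \<and> (\<forall>p. prime p \<and> p dvd q \<longrightarrow> \<eta> p \<in> {-1, 1})}"

end

theory Submission
  imports Defs
begin

definition g3 :: "nat \<Rightarrow> int" where
  "g3 m = (if m mod 3 = 1 then 1 else if m mod 3 = 2 then -1 else 0)"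

lemma g3_mult: "g3 (a*b) = g3 a * g3 b"
proof -
  have e: "(a*b) mod 3 = ((a mod 3) * (b mod 3)) mod 3" by (simp add: mod_mult_eq)
  have "a mod 3 \<in> {0,1,2}" "b mod 3 \<in> {0,1,2}" by auto
  then show ?thesis unfolding g3_def e by auto
qed

lemma legendre3: "Legendre (int m) 3 = g3 m"
proof -
  have c: "[y^2 = a] (mod 3) \<longleftrightarrow> (y mod 3)^2 mod 3 = a mod 3" for y a :: int
    by (simp add: cong_def power_mod)
  have sq: "(y mod 3)^2 mod 3 \<noteq> 2" for y :: int
  proof -
    have "y mod 3 \<in> {0,1,2}" by auto
    then show ?thesis by auto
  qed
  have "int m mod 3 = int (m mod 3)" by (simp add: zmod_int)
  moreover have "m mod 3 = 0 \<or> m mod 3 = 1 \<or> m mod 3 = 2" by auto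
  ultimately show ?thesis
  proof (elim disjE)
    assume h: "int m mod 3 = int (m mod 3)" "m mod 3 = 0"
    then show ?thesis by (simp add: Legendre_def g3_def cong_def)
  next
    assume h: "int m mod 3 = int (m mod 3)" "m mod 3 = 1"
    have "QuadRes 3 (int m)" unfolding QuadRes_def
      by (rule exI[of _ 1]) (use h in \<open>simp add: cong_def\<close>)
    then show ?thesis using h by (simp add: Legendre_def g3_def cong_def)
  next
    assume h: "int m mod 3 = int (m mod 3)" "m mod 3 = 2"
    have "\<not> QuadRes 3 (int m)" unfolding QuadRes_def c using h sq by auto
    then show ?thesis using h by (simp add: Legendre_def g3_def cong_def)
  qed
qed

lemma g3_prod_mset: "prod_mset (image_mset g3 M) = g3 (prod_mset M)"
proof (induction M)
  case empty then show ?case by (simp add: g3_def)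
next
  case (add x M) then show ?case by (simp add: g3_mult)
qed

lemma mc_mset: "modified_char q \<chi> \<eta> n =
   prod_mset (image_mset (\<lambda>p. if p dvd q then \<eta> p else \<chi> p) (prime_factorization n))"
  unfolding modified_char_def image_prod_mset_multiplicity
  by (intro prod.cong refl) (simp add: count_prime_factorization_prime in_prime_factors_imp_prime)

lemma mc_mult: "a \<noteq> 0 \<Longrightarrow> b \<noteq> 0 \<Longrightarrow>
   modified_char q \<chi> \<eta> (a*b) = modified_char q \<chi> \<eta> a * modified_char q \<chi> \<eta> b"
  by (simp add: mc_mset prime_factorization_mult)

lemma mc_3: "modified_char 3 \<chi> (\<lambda>_. e) 3 = e"
proof -
  have "prime (3::nat)" by simp
  then have "prime_factorization (3::nat) = {#3#}" by (rule prime_factorization_prime)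
  then show ?thesis by (simp add: mc_mset)
qed

lemma mc_nondiv:
  assumes "\<not> 3 dvd m" "m > 0"
  shows "modified_char 3 (\<lambda>m. Legendre (int m) 3) (\<lambda>_. e) m = g3 m"
proof -
  have "image_mset (\<lambda>p. if p dvd 3 then e else Legendre (int p) 3) (prime_factorization m)
      = image_mset g3 (prime_factorization m)"
  proof (rule image_mset_cong)
    fix p assume p: "p \<in># prime_factorization m"
    then have pp: "prime p" and pd: "p dvd m" by (auto simp: in_prime_factors_iff)
    have "\<not> p dvd 3"
    proof
      assume "p dvd 3"
      then have "p = 1 \<or> p = 3" using prime_nat_iff[of 3] by auto
      then show False using pp pd assms(1) by auto
    qed
    then show "(if p dvd 3 then e else Legendre (int p) 3) = g3 p" by (simp add: legendre3)
  qed
  then show ?thesis using assms by (simp add: mc_mset g3_prod_mset)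
qed

lemma P3: "(\<Sum>m<N. g3 m) = (if N mod 3 = 2 then 1 else 0)"
proof (induction N)
  case 0 then show ?case by simp
next
  case (Suc N)
  have "N mod 3 \<in> {0,1,2}" by auto
  moreover have "Suc N mod 3 = (if N mod 3 = 2 then 0 else Suc (N mod 3))" by (simp add: mod_Suc)
  ultimately show ?case using Suc by (auto simp: g3_def)
qed

lemma g3_interval: "(\<Sum>m\<in>{n<..n+k}. g3 m) = (\<Sum>m<Suc (n+k). g3 m) - (\<Sum>m<Suc n. g3 m)"
proof (induction k)
  case 0 then show ?case by simp
next
  case (Suc k)
  have "{n<..n + Suc k} = insert (Suc (n+k)) {n<..n+k}" by auto
  then show ?case using Suc by simp
qed

lemma g3_interval_bound: "\<bar>\<Sum>m\<in>{n<..n+k}. g3 m\<bar> \<le> 1"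
  unfolding g3_interval P3 by auto

lemma mult3_set: "{m\<in>{n<..n+k::nat}. 3 dvd m} = (\<lambda>t. 3*t) ` {n div 3<..(n+k) div 3}"
proof (rule Set.set_eqI)
  fix m
  show "m \<in> {m\<in>{n<..n+k}. 3 dvd m} \<longleftrightarrow> m \<in> (\<lambda>t. 3*t) ` {n div 3<..(n+k) div 3}"
  proof
    assume "m \<in> {m\<in>{n<..n+k}. 3 dvd m}"
    then obtain t where "m = 3*t" "n < 3*t" "3*t \<le> n+k" by auto
    then show "m \<in> (\<lambda>t. 3*t) ` {n div 3<..(n+k) div 3}"
    proof (intro image_eqI[of _ _ t])
      have a: "n mod 3 < 3" by simp
      have "n = 3 * (n div 3) + n mod 3" by simp
      then have "n div 3 < t" using \<open>n < 3*t\<close> a by linarith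
      moreover have "t \<le> (n+k) div 3" using div_le_mono[OF \<open>3*t \<le> n+k\<close>, of 3] by simp
      ultimately show "t \<in> {n div 3<..(n+k) div 3}" by simp
    qed (use \<open>m = 3*t\<close> in simp)
  next
    assume "m \<in> (\<lambda>t. 3*t) ` {n div 3<..(n+k) div 3}"
    then obtain t where "m = 3*t" "n div 3 < t" "t \<le> (n+k) div 3" by auto
    moreover have "n = 3 * (n div 3) + n mod 3" "n mod 3 < 3" "n + k = 3 * ((n+k) div 3) + (n+k) mod 3" by simp_all
    ultimately show "m \<in> {m\<in>{n<..n+k}. 3 dvd m}" by auto
  qed
qed

context
  fixes e :: int
  assumes e: "e \<in> {-1,1}"
begin

abbreviation "FF \<equiv> modified_char 3 (\<lambda>m. Legendre (int m) 3) (\<lambda>_. e)"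

lemma FF_3t: "t > 0 \<Longrightarrow> FF (3*t) = e * FF t"
  using mc_mult[of 3 t] mc_3 by simp

lemma FF_pm: "m > 0 \<Longrightarrow> FF m \<in> {-1,1}"
proof (induction m rule: less_induct)
  case (less m)
  show ?case
  proof (cases "3 dvd m")
    case True
    then obtain t where t: "m = 3*t" by auto
    with less.prems have "t > 0" "t < m" by auto
    with less.IH[of t] t FF_3t[of t] e show ?thesis by auto
  next
    case False
    then have "m mod 3 \<noteq> 0" by (simp add: dvd_eq_mod_eq_0)
    then show ?thesis using mc_nondiv[OF False less.prems] by (auto simp: g3_def)
  qed
qed

lemma FF_split: "m > 0 \<Longrightarrow> FF m = g3 m + (if 3 dvd m then FF m else 0)"
  using mc_nondiv[of m e] by (auto simp: g3_def)

lemma S_rec: "(\<Sum>m\<in>{n<..n+k}. FF m) = (\<Sum>m\<in>{n<..n+k}. g3 m) +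
   e * (\<Sum>t\<in>{n div 3<..n div 3 + ((n+k) div 3 - n div 3)}. FF t)"
proof -
  have "(\<Sum>m\<in>{n<..n+k}. FF m) = (\<Sum>m\<in>{n<..n+k}. g3 m + (if 3 dvd m then FF m else 0))"
    by (intro sum.cong refl FF_split) auto
  also have "\<dots> = (\<Sum>m\<in>{n<..n+k}. g3 m) + (\<Sum>m\<in>{m\<in>{n<..n+k}. 3 dvd m}. FF m)"
    by (simp add: sum.distrib sum.inter_filter[symmetric])
  also have "(\<Sum>m\<in>{m\<in>{n<..n+k}. 3 dvd m}. FF m) = (\<Sum>t\<in>{n div 3<..(n+k) div 3}. FF (3*t))"
    unfolding mult3_set by (subst sum.reindex) (auto simp: inj_on_def)
  also have "\<dots> = (\<Sum>t\<in>{n div 3<..(n+k) div 3}. e * FF t)"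
    by (intro sum.cong refl FF_3t) auto
  also have "{n div 3<..(n+k) div 3} = {n div 3<..n div 3 + ((n+k) div 3 - n div 3)}"
    by (simp add: div_le_mono)
  finally show ?thesis by (simp add: sum_distrib_left)
qed

lemma S_bound: "k \<le> 3^a \<Longrightarrow> \<bar>\<Sum>m\<in>{n<..n+k}. FF m\<bar> \<le> int a + 1"
proof (induction a arbitrary: n k)
  case 0
  then have "k = 0 \<or> k = 1" by (simp add: le_Suc_eq)
  then show ?case
  proof
    assume "k = 1"
    then have "{n<..n+k} = {Suc n}" by auto
    then have "(\<Sum>m\<in>{n<..n+k}. FF m) = FF (Suc n)" by simp
    moreover have "FF (Suc n) \<in> {-1,1}" by (rule FF_pm) simp
    ultimately show ?thesis by auto
  next
    assume "k = 0"
    then show ?thesis by simp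
  qed
next
  case (Suc a)
  define k' where "k' = (n+k) div 3 - n div 3"
  have d: "n div 3 \<le> (n+k) div 3" by (simp add: div_le_mono)
  have h: "n = 3 * (n div 3) + n mod 3" "n mod 3 < 3" "n + k = 3 * ((n+k) div 3) + (n+k) mod 3"
    by simp_all
  have kk: "k' + n div 3 = (n+k) div 3" using d unfolding k'_def by simp
  have "k \<le> 3 * 3^a" using Suc.prems by simp
  then have "k' \<le> 3^a" using h kk by linarith
  then have IH: "\<bar>\<Sum>t\<in>{n div 3<..n div 3 + k'}. FF t\<bar> \<le> int a + 1" by (rule Suc.IH)
  have S: "(\<Sum>m\<in>{n<..n+k}. FF m) = (\<Sum>m\<in>{n<..n+k}. g3 m) +
     e * (\<Sum>t\<in>{n div 3<..n div 3 + k'}. FF t)"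
    unfolding k'_def by (rule S_rec)
  have ae: "\<bar>e * (\<Sum>t\<in>{n div 3<..n div 3 + k'}. FF t)\<bar> = \<bar>\<Sum>t\<in>{n div 3<..n div 3 + k'}. FF t\<bar>"
    using e by (auto simp: abs_mult)
  have g: "\<bar>\<Sum>m\<in>{n<..n+k}. g3 m\<bar> \<le> 1" by (rule g3_interval_bound)
  have "\<bar>(\<Sum>m\<in>{n<..n+k}. g3 m) + e * (\<Sum>t\<in>{n div 3<..n div 3 + k'}. FF t)\<bar>
     \<le> \<bar>\<Sum>m\<in>{n<..n+k}. g3 m\<bar> + \<bar>e * (\<Sum>t\<in>{n div 3<..n div 3 + k'}. FF t)\<bar>"
    by (rule abs_triangle_ineq)
  then show ?case unfolding S using ae g IH by simp
qed

lemma count_sum: "(\<Sum>m\<in>{n<..n+k}. FF m) = int k - 2 * int (neg_count FF n k)"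
proof -
  have im: "(\<lambda>m. n+m) ` {1..k} = {n<..n+k}"
  proof (rule Set.set_eqI)
    fix x show "x \<in> (\<lambda>m. n+m) ` {1..k} \<longleftrightarrow> x \<in> {n<..n+k}"
    proof
      assume "x \<in> {n<..n+k}" then show "x \<in> (\<lambda>m. n+m) ` {1..k}"
        by (intro image_eqI[of _ _ "x - n"]) auto
    qed auto
  qed
  have "(\<Sum>m\<in>{n<..n+k}. FF m) = (\<Sum>m\<in>{1..k}. FF (n+m))"
    unfolding im[symmetric] by (subst sum.reindex) (auto simp: inj_on_def)
  also have "\<dots> = (\<Sum>m\<in>{1..k}. 1 - 2 * (if FF (n+m) = -1 then 1 else 0))"
  proof (intro sum.cong refl)
    fix m assume "m \<in> {1..k}"
    then have "FF (n+m) \<in> {-1,1}" by (intro FF_pm) auto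
    then show "FF (n+m) = 1 - 2 * (if FF (n+m) = -1 then 1 else 0)" by auto
  qed
  also have "\<dots> = int k - 2 * (\<Sum>m\<in>{1..k}. (if FF (n+m) = -1 then 1 else 0))"
    by (simp add: sum_subtractf sum_distrib_left)
  also have "(\<Sum>m\<in>{1..k}. (if FF (n+m) = -1 then 1 else 0)) = (\<Sum>m\<in>{m\<in>{1..k}. FF (n+m) = -1}. (1::int))"
    by (rule sum.inter_filter[symmetric]) simp
  also have "\<dots> = int (card {m\<in>{1..k}. FF (n+m) = -1})" by (rule sum_constant[THEN trans]) simp
  also have "\<dots> = int (neg_count FF n k)" by (simp add: neg_count_def)
  finally show ?thesis .
qed

lemma part1:
  assumes "k \<ge> 1"
  shows "real (neg_count FF n k) \<ge> (real k - real_of_int \<lfloor>ln (real k) / ln 3\<rfloor> - 2) / 2"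
proof -
  define J where "J = \<lfloor>ln (real k) / ln 3\<rfloor>"
  have l3: "ln (3::real) > 0" by simp
  have "ln (real k) \<ge> 0" using assms by simp
  then have J0: "J \<ge> 0" unfolding J_def using l3 by simp
  have "ln (real k) / ln 3 < of_int J + 1" unfolding J_def by linarith
  then have "ln (real k) < (of_int J + 1) * ln 3" using l3 by (simp add: divide_less_eq)
  also have "(of_int J + 1) * ln 3 = ln ((3::real) ^ (nat J + 1))"
  proof -
    have "ln ((3::real) ^ (nat J + 1)) = real (nat J + 1) * ln 3" by (rule ln_realpow)
    moreover have "real (nat J + 1) = of_int J + 1" using J0 by simp
    ultimately show ?thesis by simp
  qed
  finally have "real k < 3 ^ (nat J + 1)"
    using assms by (subst (asm) ln_less_cancel_iff) auto
  then have "k \<le> 3 ^ (nat J + 1)"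
    by (metis less_imp_le of_nat_less_iff of_nat_numeral of_nat_power)
  then have "\<bar>\<Sum>m\<in>{n<..n+k}. FF m\<bar> \<le> int (nat J + 1) + 1" by (rule S_bound)
  then have "int k - 2 * int (neg_count FF n k) \<le> J + 2" using J0 unfolding count_sum by simp
  then have "real_of_int (int k - 2 * int (neg_count FF n k)) \<le> real_of_int (J + 2)"
    by (simp only: of_int_le_iff)
  then show ?thesis unfolding J_def by simp
qed

end

lemma real_char3: "real_char 3 (\<lambda>m. Legendre (int m) 3)"
  unfolding real_char_def legendre3
proof (intro conjI allI)
  fix n :: nat
  show "g3 (n+3) = g3 n" by (simp add: g3_def)
  show "g3 n \<in> {-1,0,1}" by (simp add: g3_def)
  have p3: "prime (3::nat)" by simp
  have c: "coprime n 3 \<longleftrightarrow> \<not> 3 dvd n"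
  proof
    assume "coprime n 3"
    then show "\<not> 3 dvd n" using coprime_common_divisor[of n 3 3] by auto
  next
    assume "\<not> 3 dvd n"
    then have "coprime 3 n" using prime_imp_coprime[OF p3] by blast
    then show "coprime n 3" by (simp add: coprime_commute)
  qed
  show "(g3 n = 0) = (\<not> coprime n 3)" unfolding c by (auto simp: g3_def dvd_eq_mod_eq_0)
next
  fix m n :: nat show "g3 (m*n) = g3 m * g3 n" by (rule g3_mult)
qed

lemma aux_lin: "(x::real) \<le> 2*L \<Longrightarrow> (K - x - 2)/2 \<le> c \<Longrightarrow> 1/2 \<le> L \<Longrightarrow> K/2 - 3*L \<le> c"
proof -
  assume h: "x \<le> 2*L" "(K - x - 2)/2 \<le> c" "1/2 \<le> L"
  have "K - x - 2 \<le> 2*c" using h(2) by (simp add: field_simps)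
  then show ?thesis using h(1,3) by (simp add: field_simps)
qed

lemma ln2_half: "ln (2::real) \<ge> 1/2"
proof -
  have "exp (1/2::real) \<le> 2"
  proof (rule ccontr)
    assume "\<not> exp (1/2::real) \<le> 2"
    then have "2*2 < exp (1/2::real) * exp (1/2)" by (intro mult_strict_mono) auto
    also have "exp (1/2::real) * exp (1/2) = exp 1" by (simp flip: exp_add)
    finally show False using exp_le by simp
  qed
  then show ?thesis by (subst ln_ge_iff) auto
qed

theorem mainTheorem3:
  shows "(\<forall>e::int \<in> {-1, 1}. \<forall>k::nat \<ge> 1. \<forall>n::nat.
            real (neg_count (modified_char 3 (\<lambda>m. Legendre (int m) 3) (\<lambda>_. e)) n k)
              \<ge> (real k - real_of_int \<lfloor>ln (real k) / ln 3\<rfloor> - 2) / 2)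
         \<and> (\<exists>C::real. \<forall>k::nat \<ge> 2. real (delta k) \<ge> real k / 2 - C * ln (real k))"
proof
  show P1: "\<forall>e::int \<in> {-1, 1}. \<forall>k::nat \<ge> 1. \<forall>n::nat.
            real (neg_count (modified_char 3 (\<lambda>m. Legendre (int m) 3) (\<lambda>_. e)) n k)
              \<ge> (real k - real_of_int \<lfloor>ln (real k) / ln 3\<rfloor> - 2) / 2"
    using part1 by blast
  show "\<exists>C::real. \<forall>k::nat \<ge> 2. real (delta k) \<ge> real k / 2 - C * ln (real k)"
  proof (intro exI[of _ 3] allI impI)
    fix k :: nat assume k2: "k \<ge> 2"
    define X where "X = {Min (range (\<lambda>n. neg_count (modified_char q \<chi> \<eta>) n k)) | q \<chi> \<eta>.
       q > 1 \<and> real_char q \<chi> \<and> (\<forall>p. prime p \<and> p dvd q \<longrightarrow> \<eta> p \<in> {-1, 1})}"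
    have nc_le: "neg_count f n k \<le> k" for f n
    proof -
      have "neg_count f n k \<le> card {1..k}" unfolding neg_count_def by (rule card_mono) auto
      then show ?thesis by simp
    qed
    have fin: "finite (range (\<lambda>n. neg_count f n k))" for f
      by (rule finite_subset[of _ "{..k}"]) (auto simp: nc_le)
    have bdd: "bdd_above X"
      unfolding X_def bdd_above_def
      by (intro exI[of _ k]) (auto intro: order.trans[OF Min_le[OF fin] nc_le])
    let ?F = "modified_char 3 (\<lambda>m. Legendre (int m) 3) (\<lambda>_. 1)"
    have mem: "Min (range (\<lambda>n. neg_count ?F n k)) \<in> X"
      unfolding X_def using real_char3 by fastforce
    have "Min (range (\<lambda>n. neg_count ?F n k)) \<le> delta k"
      unfolding delta_def X_def[symmetric] by (rule cSup_upper[OF mem bdd])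
    moreover obtain n0 where n0: "Min (range (\<lambda>n. neg_count ?F n k)) = neg_count ?F n0 k"
      using Min_in[OF fin[of ?F]] by auto
    ultimately have le: "neg_count ?F n0 k \<le> delta k" by simp
    have b: "real (neg_count ?F n0 k) \<ge> (real k - real_of_int \<lfloor>ln (real k) / ln 3\<rfloor> - 2) / 2"
      using P1 k2 by auto
    have l2: "ln (real k) \<ge> 1/2"
    proof -
      have "ln 2 \<le> ln (real k)" using k2 by simp
      then show ?thesis using ln2_half by linarith
    qed
    have l3: "ln (3::real) \<ge> 1/2"
    proof -
      have "ln 2 \<le> ln (3::real)" by simp
      then show ?thesis using ln2_half by linarith
    qed
    have "real_of_int \<lfloor>ln (real k) / ln 3\<rfloor> \<le> ln (real k) / ln 3" by simp
    also have "\<dots> \<le> ln (real k) / (1/2)" using l2 l3 by (intro divide_left_mono) auto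
    finally have "real_of_int \<lfloor>ln (real k) / ln 3\<rfloor> \<le> 2 * ln (real k)" by simp
    then have "real k / 2 - 3 * ln (real k) \<le> real (neg_count ?F n0 k)"
    proof -
      assume a: "real_of_int \<lfloor>ln (real k) / ln 3\<rfloor> \<le> 2 * ln (real k)"
      show ?thesis
        using aux_lin[OF a b l2] .
    qed
    also have "\<dots> \<le> real (delta k)" using le by simp
    finally show "real k / 2 - 3 * ln (real k) \<le> real (delta k)" .
  qed
qed

end
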